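(* Let $\psi\in C^1((0,\infty))$, $d>0$, and let $G=(V,E)$ be a finite graph with heat semigroup $(P_t)_{t\ge0}$. The following are equivalent: (1) $G$ satisfies $CD\psi(d,0)$. (2) For all $f\in C^+(V)$ and all $t\ge0$, \[ P_tf\;\Delta^\psi P_tf\ \ge\ P_t\!\left(f\,\Delta^\psi f\right)\left(1+\frac{2t}{d}\,\Delta^\psi P_tf\right). \] Moreover, if these hold, then $-\Delta^\psi P_tf\le\frac{d}{2t}$ for all $f\in C^+(V)$ and all $t>0$.
   Context: A finite graph $G=(V,E)$: finite set $V$, irreflexive symmetric relation $E$; $v\sim w$ iff $(v,w)\in E$. $C(V)$: real functions on $V$; $C^+(V)$: positive ones. Laplacian $\Delta f(v)=\sum_{w\sim v}(f(w)-f(v))$. Heat semigroup: $P_tf:=e^{t\Delta}f=\sum_{k\ge0}\frac{t^k\Delta^kf}{k!}$ for $t\ge0$ (it maps positive functions to positive functions). For $f\in C^+(V)$: $(\Delta^\psi f)(v):=\Delta\big[\psi\big(\tfrac{f}{f(v)}\big)\big](v)$; $(\Omega^\psi f)(v):=\Delta\Big[\psi'\big(\tfrac{f}{f(v)}\big)\cdot\tfrac{f}{f(v)}\cdot\big(\tfrac{\Delta f}{f}-\tfrac{(\Delta f)(v)}{f(v)}\big)\Big](v)$; $2\Gamma_2^\psi(f):=\Omega^\psi f+\frac{\Delta f\,\Delta^\psi f}{f}-\frac{\Delta(f\,\Delta^\psi f)}{f}$. $G$ satisfies $CD\psi(d,0)$ if $\Gamma_2^\psi(f)\ge\frac1d(\Delta^\psi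 f)^2$ for all $f\in C^+(V)$. All inequalities are pointwise on $V$. *)

theory Defs
  imports "HOL-Analysis.Analysis"
begin

text \<open>Finite graph: vertex set is the finite type 'a, edge relation E (symmetric, irreflexive).\<close>

definition graph_lap :: "('a::finite \<Rightarrow> 'a \<Rightarrow> bool) \<Rightarrow> ('a \<Rightarrow> real) \<Rightarrow> 'a \<Rightarrow> real" where
  "graph_lap E f v = (\<Sum>w\<in>{w. E v w}. f w - f v)"

definition heat_sg :: "('a::finite \<Rightarrow> 'a \<Rightarrow> bool) \<Rightarrow> real \<Rightarrow> ('a \<Rightarrow> real) \<Rightarrow> 'a \<Rightarrow> real" where
  "heat_sg E t f v = (\<Sum>k. t ^ k / fact k * ((graph_lap E ^^ k) f) v)"

definition lap_psi :: "('a::finite \<Rightarrow> 'a \<Rightarrow> bool) \<Rightarrow> (real \<Rightarrow> real) \<Rightarrow> ('a \<Rightarrow> real) \<Rightarrow> 'a \<Rightarrow> real" where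
  "lap_psi E \<psi> f v = graph_lap E (\<lambda>w. \<psi> (f w / f v)) v"

definition omega_psi :: "('a::finite \<Rightarrow> 'a \<Rightarrow> bool) \<Rightarrow> (real \<Rightarrow> real) \<Rightarrow> ('a \<Rightarrow> real) \<Rightarrow> 'a \<Rightarrow> real" where
  "omega_psi E \<psi>' f v = graph_lap E (\<lambda>w. \<psi>' (f w / f v) * (f w / f v)
       * (graph_lap E f w / f w - graph_lap E f v / f v)) v"

text \<open>gamma2_psi is \<open>\<Gamma>\<^sub>2\<^sup>\<psi>\<close> (half of the defining expression for \<open>2\<Gamma>\<^sub>2\<^sup>\<psi>\<close>).\<close>
definition gamma2_psi :: "('a::finite \<Rightarrow> 'a \<Rightarrow> bool) \<Rightarrow> (real \<Rightarrow> real) \<Rightarrow> (real \<Rightarrow> real) \<Rightarrow> ('a \<Rightarrow> real) \<Rightarrow> 'a \<Rightarrow> real" where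
  "gamma2_psi E \<psi> \<psi>' f v = (omega_psi E \<psi>' f v
       + graph_lap E f v * lap_psi E \<psi> f v / f v
       - graph_lap E (\<lambda>w. f w * lap_psi E \<psi> f w) v / f v) / 2"

definition CD_psi :: "('a::finite \<Rightarrow> 'a \<Rightarrow> bool) \<Rightarrow> (real \<Rightarrow> real) \<Rightarrow> (real \<Rightarrow> real) \<Rightarrow> real \<Rightarrow> bool" where
  "CD_psi E \<psi> \<psi>' d = (\<forall>f. (\<forall>v. f v > 0) \<longrightarrow>
       (\<forall>v. gamma2_psi E \<psi> \<psi>' f v \<ge> (lap_psi E \<psi> f v)\<^sup>2 / d))"

end

theory Submission
  imports Defs
begin


definition opm :: "('a::finite \<Rightarrow> 'a \<Rightarrow> real) \<Rightarrow> ('a \<Rightarrow> real) \<Rightarrow> 'a \<Rightarrow> real" where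
  "opm m h v = (\<Sum>u\<in>UNIV. m v u * h u)"

definition nrm :: "('a::finite \<Rightarrow> real) \<Rightarrow> real" where
  "nrm h = (\<Sum>v\<in>UNIV. \<bar>h v\<bar>)"

definition bnd :: "('a::finite \<Rightarrow> 'a \<Rightarrow> real) \<Rightarrow> real" where
  "bnd m = (\<Sum>v\<in>UNIV. \<Sum>u\<in>UNIV. \<bar>m v u\<bar>)"

definition dlt :: "'a \<Rightarrow> 'a \<Rightarrow> real" where
  "dlt u = (\<lambda>w. if w = u then 1 else 0)"

lemma nrm_nonneg: "nrm h \<ge> 0"
  unfolding nrm_def by (simp add: sum_nonneg)

lemma bnd_nonneg: "bnd m \<ge> 0"
  unfolding bnd_def by (simp add: sum_nonneg)

lemma abs_le_nrm: "\<bar>h v\<bar> \<le> nrm (h::'a::finite \<Rightarrow> real)"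
  unfolding nrm_def by (rule member_le_sum) auto

lemma opm_bound: "nrm (opm m h) \<le> bnd m * nrm h"
proof -
  have "\<bar>opm m h v\<bar> \<le> (\<Sum>u\<in>UNIV. \<bar>m v u\<bar>) * nrm h" for v
  proof -
    have "\<bar>opm m h v\<bar> \<le> (\<Sum>u\<in>UNIV. \<bar>m v u * h u\<bar>)"
      unfolding opm_def by (rule sum_abs)
    also have "\<dots> \<le> (\<Sum>u\<in>UNIV. \<bar>m v u\<bar> * nrm h)"
      by (rule sum_mono) (simp add: abs_mult abs_le_nrm mult_left_mono)
    finally show ?thesis by (simp add: sum_distrib_right)
  qed
  then have "nrm (opm m h) \<le> (\<Sum>v\<in>UNIV. (\<Sum>u\<in>UNIV. \<bar>m v u\<bar>) * nrm h)"
    unfolding nrm_def by (rule sum_mono)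
  then show ?thesis by (simp add: bnd_def sum_distrib_right)
qed

lemma pow_bound: "nrm ((opm m ^^ k) h) \<le> bnd m ^ k * nrm h"
proof (induction k)
  case 0 then show ?case by simp
next
  case (Suc k)
  have "nrm ((opm m ^^ Suc k) h) \<le> bnd m * nrm ((opm m ^^ k) h)"
    by (simp add: opm_bound)
  also have "\<dots> \<le> bnd m * (bnd m ^ k * nrm h)"
    using Suc bnd_nonneg by (rule mult_left_mono)
  finally show ?case by (simp add: mult.assoc)
qed

lemma pow_bound_pt: "\<bar>(opm m ^^ k) h v\<bar> \<le> bnd m ^ k * nrm h"
  using abs_le_nrm pow_bound order_trans by blast

lemma opm_sum: "opm m (\<lambda>w. \<Sum>i\<in>I. h i w) v = (\<Sum>i\<in>I. opm m (h i) v)"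
  unfolding opm_def by (simp add: sum_distrib_left sum.swap[of _ I])

lemma opm_cmult: "opm m (\<lambda>w. c * h w) v = c * opm m h v"
  unfolding opm_def by (simp add: sum_distrib_left algebra_simps)

lemma opm_add: "opm m (\<lambda>w. h w + g w) v = opm m h v + opm m g v"
  unfolding opm_def by (simp add: sum.distrib algebra_simps)

lemma opm_diff: "opm m (\<lambda>w. h w - g w) v = opm m h v - opm m g v"
  unfolding opm_def by (simp add: sum_subtractf algebra_simps)

lemma pow_repr: "(opm m ^^ k) h v = (\<Sum>u\<in>UNIV. h u * (opm m ^^ k) (dlt u) v)"
proof (induction k arbitrary: v)
  case 0
  have "(\<Sum>u\<in>UNIV. h u * dlt u v) = (\<Sum>u\<in>UNIV. if v = u then h u else 0)"
    by (rule sum.cong) (auto simp: dlt_def)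
  then show ?case by simp
next
  case (Suc k)
  have e: "(opm m ^^ k) h = (\<lambda>w. \<Sum>u\<in>UNIV. h u * (opm m ^^ k) (dlt u) w)"
    using Suc by auto
  have "(opm m ^^ Suc k) h v = opm m ((opm m ^^ k) h) v" by simp
  also have "\<dots> = (\<Sum>u\<in>UNIV. opm m (\<lambda>w. h u * (opm m ^^ k) (dlt u) w) v)"
    by (subst e) (rule opm_sum)
  also have "\<dots> = (\<Sum>u\<in>UNIV. h u * (opm m ^^ Suc k) (dlt u) v)"
    by (simp add: opm_cmult)
  finally show ?case .
qed

definition S :: "('a::finite \<Rightarrow> 'a \<Rightarrow> real) \<Rightarrow> real \<Rightarrow> ('a \<Rightarrow> real) \<Rightarrow> 'a \<Rightarrow> real" where
  "S m t h v = (\<Sum>k. t ^ k / fact k * ((opm m ^^ k) h) v)"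

definition cf where "cf m h v k = (opm m ^^ k) h v / fact k"

lemma S_pow: "S m t h v = (\<Sum>k. cf m h v k * t ^ k)"
  unfolding S_def cf_def by (simp add: algebra_simps)

lemma summable_cf: "summable (\<lambda>k. cf m h v k * t ^ k)"
proof (rule summable_comparison_test')
  show "summable (\<lambda>k. nrm h * (inverse (fact k) * (bnd m * \<bar>t\<bar>) ^ k))"
    by (intro summable_mult summable_exp)
  fix k
  have "norm (cf m h v k * t ^ k) = \<bar>(opm m ^^ k) h v\<bar> * \<bar>t\<bar> ^ k / fact k"
    by (simp add: cf_def abs_mult power_abs)
  also have "\<dots> \<le> bnd m ^ k * nrm h * \<bar>t\<bar> ^ k / fact k"
    by (intro divide_right_mono mult_right_mono pow_bound_pt) auto
  also have "\<dots> = nrm h * (inverse (fact k) * (bnd m * \<bar>t\<bar>) ^ k)"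
    by (simp add: field_simps power_mult_distrib)
  finally show "norm (cf m h v k * t ^ k) \<le> nrm h * (inverse (fact k) * (bnd m * \<bar>t\<bar>) ^ k)" .
qed

lemma summable_S: "summable (\<lambda>k. t ^ k / fact k * ((opm m ^^ k) h) v)"
  using summable_cf[of m h v t] unfolding cf_def by (simp add: algebra_simps)

lemma S_deriv: "((\<lambda>t. S m t h v) has_real_derivative S m t (opm m h) v) (at t)"
proof -
  have d: "((\<lambda>x. \<Sum>n. cf m h v n * x^n) has_field_derivative (\<Sum>n. diffs (cf m h v) n * t^n)) (at t)"
    by (rule termdiffs_strong_converges_everywhere) (rule summable_cf)
  have "diffs (cf m h v) n = cf m (opm m h) v n" for n
    unfolding diffs_def cf_def
    by (simp add: funpow_Suc_right del: funpow.simps)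
  then have "(\<Sum>n. diffs (cf m h v) n * t^n) = S m t (opm m h) v"
    by (simp add: S_pow)
  with d show ?thesis by (simp add: S_pow[abs_def])
qed

lemma S_zero: "S m 0 h v = h v"
  using powser_zero[of "cf m h v"] by (simp add: S_pow cf_def)

lemma S_repr: "S m t h v = (\<Sum>u\<in>UNIV. h u * S m t (dlt u) v)"
proof -
  have "S m t h v = (\<Sum>k. \<Sum>u\<in>UNIV. h u * (t ^ k / fact k * (opm m ^^ k) (dlt u) v))"
    unfolding S_def by (subst pow_repr) (simp add: sum_distrib_left algebra_simps)
  also have "\<dots> = (\<Sum>u\<in>UNIV. \<Sum>k. h u * (t ^ k / fact k * (opm m ^^ k) (dlt u) v))"
    by (rule suminf_sum) (intro summable_mult summable_S)
  also have "\<dots> = (\<Sum>u\<in>UNIV. h u * S m t (dlt u) v)"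
    unfolding S_def by (intro sum.cong refl suminf_mult summable_S)
  finally show ?thesis .
qed

lemma S_commute: "opm m (\<lambda>w. S m t h w) v = S m t (opm m h) v"
proof -
  have "opm m (\<lambda>w. S m t h w) v = (\<Sum>u\<in>UNIV. \<Sum>k. m v u * (t ^ k / fact k * (opm m ^^ k) h u))"
  proof -
    have "opm m (\<lambda>w. S m t h w) v = (\<Sum>u\<in>UNIV. m v u * S m t h u)" by (simp add: opm_def)
    also have "\<dots> = (\<Sum>u\<in>UNIV. \<Sum>k. m v u * (t ^ k / fact k * (opm m ^^ k) h u))"
      unfolding S_def by (intro sum.cong refl suminf_mult[symmetric] summable_S)
    finally show ?thesis .
  qed
  also have "\<dots> = (\<Sum>k. \<Sum>u\<in>UNIV. m v u * (t ^ k / fact k * (opm m ^^ k) h u))"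
    by (rule suminf_sum[symmetric]) (intro summable_mult summable_S)
  also have "\<dots> = (\<Sum>k. t ^ k / fact k * opm m ((opm m ^^ k) h) v)"
    unfolding opm_def by (simp add: sum_distrib_left algebra_simps)
  also have "\<dots> = S m t (opm m h) v"
    unfolding S_def by (simp add: funpow_swap1)
  finally show ?thesis .
qed



definition mL :: "('a::finite \<Rightarrow> 'a \<Rightarrow> bool) \<Rightarrow> 'a \<Rightarrow> 'a \<Rightarrow> real" where
  "mL E v u = (if E v u then 1 else 0) - (if u = v then real (card {w. E v w}) else 0)"

lemma sum_if_coll: fixes P :: "'a::finite \<Rightarrow> bool" shows "(\<Sum>u\<in>UNIV. if P u then (h u::real) else 0) = (\<Sum>u | P u. h u)"
  using sum.inter_filter[of UNIV h P] by simp

lemma sum_delta_mult: fixes v :: "'a::finite" shows "(\<Sum>u\<in>UNIV. (if u = v then a else 0) * (h u::real)) = a * h v"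
proof -
  have "(\<Sum>u\<in>UNIV. (if u = v then a else 0) * h u) = (\<Sum>u\<in>UNIV. if u = v then a * h u else 0)"
    by (rule sum.cong) auto
  then show ?thesis by (simp add: sum.delta)
qed

lemma lap_opm: "graph_lap E = opm (mL E)"
proof (intro ext)
  fix h v
  have "graph_lap E h v = (\<Sum>w\<in>{w. E v w}. h w) - real (card {w. E v w}) * h v"
    unfolding graph_lap_def by (simp add: sum_subtractf)
  also have "(\<Sum>w\<in>{w. E v w}. h w) = (\<Sum>u\<in>UNIV. (if E v u then 1 else 0) * h u)"
  proof -
    have "(\<Sum>u\<in>UNIV. (if E v u then 1 else 0) * h u) = (\<Sum>u\<in>UNIV. if E v u then h u else 0)"
      by (rule sum.cong) auto
    then show ?thesis by (simp add: sum_if_coll)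
  qed
  also have "real (card {w. E v w}) * h v = (\<Sum>u\<in>UNIV. (if u = v then real (card {w. E v w}) else 0) * h u)"
    by (simp add: sum_delta_mult)
  finally show "graph_lap E h v = opm (mL E) h v"
    unfolding opm_def mL_def by (simp add: sum_subtractf left_diff_distrib)
qed

lemma heat_S: "heat_sg E = S (mL E)"
  by (intro ext) (simp add: heat_sg_def S_def lap_opm)

lemma lap_quad:
  assumes sym: "\<And>v w. E v w \<Longrightarrow> E w v"
  shows "(\<Sum>v\<in>UNIV. g v * graph_lap E g v) \<le> 0"
proof -
  define Q where "Q = (\<Sum>v\<in>UNIV. \<Sum>w\<in>UNIV. if E v w then g v * (g w - g v) else 0)"
  have q1: "(\<Sum>v\<in>UNIV. g v * graph_lap E g v) = Q"
    unfolding Q_def graph_lap_def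
    by (simp add: sum_distrib_left sum.inter_filter[symmetric])
  have "Q = (\<Sum>w\<in>UNIV. \<Sum>v\<in>UNIV. if E v w then g v * (g w - g v) else 0)"
    unfolding Q_def by (rule sum.swap)
  also have "\<dots> = (\<Sum>v\<in>UNIV. \<Sum>w\<in>UNIV. if E v w then g w * (g v - g w) else 0)"
    using sym by (intro sum.cong refl) (metis)
  finally have q2: "Q = (\<Sum>v\<in>UNIV. \<Sum>w\<in>UNIV. if E v w then g w * (g v - g w) else 0)" .
  have "2 * Q = (\<Sum>v\<in>UNIV. \<Sum>w\<in>UNIV. if E v w then -((g w - g v)^2) else 0)"
    by (subst mult_2, subst (2) q2) (simp add: Q_def sum.distrib[symmetric] power2_eq_square algebra_simps if_distrib cong: if_cong)
  also have "\<dots> \<le> 0" by (intro sum_nonpos) auto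
  finally show ?thesis using q1 by simp
qed

definition mM :: "('a::finite \<Rightarrow> 'a \<Rightarrow> bool) \<Rightarrow> 'a \<Rightarrow> 'a \<Rightarrow> real" where
  "mM E v u = mL E v u + (if u = v then real CARD('a) else 0)"

lemma opm_mM: fixes E :: "'a::finite \<Rightarrow> 'a \<Rightarrow> bool" shows "opm (mM E) h v = opm (mL E) h v + real CARD('a) * h v"
  unfolding opm_def mM_def by (simp add: sum.distrib distrib_right sum_delta_mult)

lemma mM_nonneg: fixes E :: "'a::finite \<Rightarrow> 'a \<Rightarrow> bool" shows "mM E v u \<ge> 0"
proof -
  have "card {w. E v w} \<le> CARD('a)" by (rule card_mono) auto
  then show ?thesis unfolding mM_def mL_def by auto
qed

lemma powM_nonneg: "(\<And>w. h w \<ge> 0) \<Longrightarrow> (opm (mM E) ^^ k) h v \<ge> 0"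
proof (induction k arbitrary: v)
  case 0 then show ?case by simp
next
  case (Suc k)
  then show ?case by (simp add: opm_def sum_nonneg mM_nonneg)
qed

lemma SM_nonneg: "t \<ge> 0 \<Longrightarrow> (\<And>w. h w \<ge> 0) \<Longrightarrow> S (mM E) t h v \<ge> 0"
  unfolding S_def by (intro suminf_nonneg summable_S mult_nonneg_nonneg divide_nonneg_pos powM_nonneg) auto

lemma heat_nonneg:
  assumes sym: "\<And>v w. E v w \<Longrightarrow> E w v" and s: "s \<ge> 0" and h: "\<And>w. h w \<ge> 0"
  shows "heat_sg E s h v \<ge> 0"
proof -
  define c where "c = real CARD('a)"
  define z where "z = (\<lambda>s v. S (mL E) s h v - exp (- c * s) * S (mM E) s h v)"
  have dz: "((\<lambda>s. z s v) has_real_derivative opm (mL E) (z s) v) (at s)" for s v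
  proof -
    have "((\<lambda>s. z s v) has_real_derivative
        S (mL E) s (opm (mL E) h) v - (exp (- c * s) * (- c) * S (mM E) s h v + S (mM E) s (opm (mM E) h) v * exp (- c * s))) (at s)"
    proof -
      have e: "((\<lambda>s. exp (- c * s)) has_real_derivative exp (- c * s) * (- c)) (at s)"
        by (auto intro!: derivative_eq_intros)
      show ?thesis unfolding z_def by (rule DERIV_diff[OF S_deriv DERIV_mult[OF e S_deriv]])
    qed
    moreover have "opm (mL E) (z s) v = S (mL E) s (opm (mL E) h) v - (exp (- c * s) * (- c) * S (mM E) s h v + S (mM E) s (opm (mM E) h) v * exp (- c * s))"
    proof -
      have "opm (mL E) (z s) v = opm (mL E) (\<lambda>w. S (mL E) s h w) v - exp (- c * s) * opm (mL E) (\<lambda>w. S (mM E) s h w) v"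
        unfolding z_def by (simp add: opm_diff opm_cmult)
      also have "opm (mL E) (\<lambda>w. S (mM E) s h w) v = opm (mM E) (\<lambda>w. S (mM E) s h w) v - c * S (mM E) s h v"
        by (simp add: opm_mM c_def)
      finally show ?thesis by (simp add: S_commute algebra_simps)
    qed
    ultimately show ?thesis by simp
  qed
  define N where "N = (\<lambda>s. \<Sum>v\<in>UNIV. (z s v)^2)"
  have dN: "(N has_real_derivative (\<Sum>v\<in>UNIV. 2 * z s v * opm (mL E) (z s) v)) (at s)" for s
  proof -
    have "((\<lambda>s. \<Sum>v\<in>UNIV. z s v * z s v) has_real_derivative
        (\<Sum>v\<in>UNIV. opm (mL E) (z s) v * z s v + opm (mL E) (z s) v * z s v)) (at s)"
      by (rule DERIV_sum) (rule DERIV_mult[OF dz dz])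
    then show ?thesis unfolding N_def by (simp add: power2_eq_square algebra_simps)
  qed
  have dN0: "(\<Sum>v\<in>UNIV. 2 * z s v * opm (mL E) (z s) v) \<le> 0" for s
  proof -
    have "(\<Sum>v\<in>UNIV. 2 * z s v * opm (mL E) (z s) v) = 2 * (\<Sum>v\<in>UNIV. z s v * graph_lap E (z s) v)"
      by (simp add: lap_opm sum_distrib_left mult.assoc)
    also have "\<dots> \<le> 0" using lap_quad[OF sym] by (simp add: mult_nonneg_nonpos)
    finally show ?thesis .
  qed
  have "N s \<le> N 0"
    by (rule deriv_nonpos_imp_antimono[OF dN dN0 s])
  moreover have "N 0 = 0" unfolding N_def z_def by (simp add: S_zero)
  moreover have "N s \<ge> 0" unfolding N_def by (simp add: sum_nonneg)
  ultimately have "N s = 0" by simp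
  then have "z s v = 0" unfolding N_def
    by (subst (asm) sum_nonneg_eq_0_iff) auto
  then have "heat_sg E s h v = exp (- c * s) * S (mM E) s h v"
    by (simp add: z_def heat_S)
  also have "\<dots> \<ge> 0"
  proof -
    have "S (mM E) s h v \<ge> 0" by (rule SM_nonneg[OF s]) (rule h)
    then show ?thesis by simp
  qed
  finally show ?thesis .
qed



lemma S_family_deriv:
  assumes d: "\<And>w. ((\<lambda>s. H s w) has_real_derivative H' w) (at s0)"
  shows "((\<lambda>s. S m s (H s) v) has_real_derivative S m s0 (opm m (H s0)) v + S m s0 H' v) (at s0)"
proof -
  have eq: "(\<lambda>s. S m s (H s) v) = (\<lambda>s. \<Sum>u\<in>UNIV. H s u * S m s (dlt u) v)"
    by (rule ext) (rule S_repr)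
  have "((\<lambda>s. \<Sum>u\<in>UNIV. H s u * S m s (dlt u) v) has_real_derivative
      (\<Sum>u\<in>UNIV. H' u * S m s0 (dlt u) v + S m s0 (opm m (dlt u)) v * H s0 u)) (at s0)"
    by (rule DERIV_sum) (rule DERIV_mult[OF d S_deriv])
  moreover have "(\<Sum>u\<in>UNIV. H' u * S m s0 (dlt u) v) = S m s0 H' v"
    by (rule S_repr[symmetric])
  moreover have "(\<Sum>u\<in>UNIV. S m s0 (opm m (dlt u)) v * H s0 u) = S m s0 (opm m (H s0)) v"
  proof -
    have "(\<Sum>u\<in>UNIV. S m s0 (opm m (dlt u)) v * H s0 u) = (\<Sum>u\<in>UNIV. opm m (\<lambda>w. H s0 u * S m s0 (dlt u) w) v)"
      by (simp add: opm_cmult S_commute mult.commute)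
    also have "\<dots> = opm m (\<lambda>w. \<Sum>u\<in>UNIV. H s0 u * S m s0 (dlt u) w) v"
      by (rule opm_sum[symmetric])
    also have "(\<lambda>w. \<Sum>u\<in>UNIV. H s0 u * S m s0 (dlt u) w) = (\<lambda>w. S m s0 (H s0) w)"
      by (rule ext) (rule S_repr[symmetric])
    finally show ?thesis by (simp add: S_commute)
  qed
  ultimately show ?thesis unfolding eq by (simp add: sum.distrib add.commute)
qed

lemma heat_deriv: "((\<lambda>t. heat_sg E t h v) has_real_derivative heat_sg E t (graph_lap E h) v) (at t)"
  by (simp add: heat_S lap_opm S_deriv)

lemma heat_commute: "graph_lap E (heat_sg E t h) v = heat_sg E t (graph_lap E h) v"
  using S_commute[of "mL E" t h v] by (simp add: heat_S lap_opm)

lemma heat_zero: "heat_sg E 0 h = h"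
  by (rule ext) (simp add: heat_S S_zero)

lemma heat_repr: "heat_sg E t h v = (\<Sum>u\<in>UNIV. h u * heat_sg E t (dlt u) v)"
  by (simp add: heat_S S_repr[of _ _ h])

lemma heat_family_deriv:
  assumes d: "\<And>w. ((\<lambda>s. H s w) has_real_derivative H' w) (at s0)"
  shows "((\<lambda>s. heat_sg E s (H s) v) has_real_derivative heat_sg E s0 (graph_lap E (H s0)) v + heat_sg E s0 H' v) (at s0)"
  using S_family_deriv[OF d] by (simp add: heat_S lap_opm)

lemma lap_const: "graph_lap E (\<lambda>_. c) v = 0"
  by (simp add: graph_lap_def)

lemma heat_zero_fun: "heat_sg E t (\<lambda>_. 0) v = 0"
  by (simp add: heat_repr[of _ _ "\<lambda>_. 0"])

lemma heat_one: "heat_sg E t (\<lambda>_. 1) v = 1"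
proof -
  have "\<forall>x. ((\<lambda>t. heat_sg E t (\<lambda>_. 1) v) has_real_derivative 0) (at x)"
  proof
    fix x
    have "graph_lap E (\<lambda>_. 1) = (\<lambda>_. 0)" by (rule ext) (rule lap_const)
    then show "((\<lambda>t. heat_sg E t (\<lambda>_. 1) v) has_real_derivative 0) (at x)"
      using heat_deriv[of E "\<lambda>_. 1" v x] by (simp add: heat_zero_fun)
  qed
  from DERIV_isconst_all[OF this] have "heat_sg E t (\<lambda>_. 1) v = heat_sg E 0 (\<lambda>_. 1) v" .
  then show ?thesis by (simp add: heat_zero)
qed

context
  fixes E :: "'a::finite \<Rightarrow> 'a \<Rightarrow> bool"
  assumes sym: "\<And>v w. E v w \<Longrightarrow> E w v"
begin

lemma kern_nonneg: "s \<ge> 0 \<Longrightarrow> heat_sg E s (dlt u) v \<ge> 0"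
  by (rule heat_nonneg[OF sym]) (auto simp: dlt_def)

lemma heat_mono:
  assumes "s \<ge> 0" "\<And>w. h w \<le> g w"
  shows "heat_sg E s h v \<le> heat_sg E s g v"
  unfolding heat_repr[of E s h] heat_repr[of E s g]
  by (intro sum_mono mult_right_mono assms kern_nonneg)

lemma heat_pos:
  assumes s: "s \<ge> 0" and f: "\<And>w. f w > 0"
  shows "heat_sg E s f v > 0"
proof -
  define m where "m = Min (range f)"
  have m: "m \<in> range f" unfolding m_def by (rule Min_in) auto
  then have mpos: "m > 0" using f by auto
  have le: "m \<le> f w" for w unfolding m_def by (rule Min_le) auto
  have "heat_sg E s (\<lambda>_. m) v = m"
    using heat_one[of E s v] by (simp add: heat_repr[of E s "\<lambda>_. m"] heat_repr[of E s "\<lambda>_. 1"] sum_distrib_left[symmetric])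
  moreover have "heat_sg E s (\<lambda>_. m) v \<le> heat_sg E s f v"
    by (rule heat_mono[OF s le])
  ultimately show ?thesis using mpos by simp
qed

lemma heat_CS:
  assumes s: "s \<ge> 0" and g: "\<And>w. g w > 0"
  shows "(heat_sg E s (\<lambda>w. g w * k w) v)^2 \<le> heat_sg E s (\<lambda>w. g w * (k w)^2) v * heat_sg E s g v"
proof -
  define p where "p u = heat_sg E s (dlt u) v" for u
  have p: "p u \<ge> 0" for u unfolding p_def by (rule kern_nonneg[OF s])
  define A where "A = (\<Sum>u\<in>UNIV. g u * (k u)^2 * p u)"
  define B where "B = (\<Sum>u\<in>UNIV. g u * k u * p u)"
  define C where "C = (\<Sum>u\<in>UNIV. g u * p u)"
  have C: "C = heat_sg E s g v" unfolding C_def p_def by (rule heat_repr[symmetric])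
  have Cpos: "C > 0" using heat_pos[OF s g] C by simp
  define l where "l = B / C"
  have "0 \<le> (\<Sum>u\<in>UNIV. g u * p u * (k u - l)^2)"
    by (intro sum_nonneg mult_nonneg_nonneg p less_imp_le[OF g]) auto
  also have "\<dots> = A - 2 * l * B + l^2 * C"
    unfolding A_def B_def C_def
    by (simp add: power2_eq_square algebra_simps sum.distrib sum_subtractf sum_distrib_left)
  also have "\<dots> = A - B^2 / C"
    unfolding l_def using Cpos by (simp add: field_simps power2_eq_square)
  finally have "B^2 \<le> A * C" using Cpos by (simp add: field_simps)
  moreover have "A = heat_sg E s (\<lambda>w. g w * (k w)^2) v"
    unfolding A_def p_def by (rule heat_repr[symmetric])
  moreover have "B = heat_sg E s (\<lambda>w. g w * k w) v"
    unfolding B_def p_def by (rule heat_repr[symmetric])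
  ultimately show ?thesis using C by simp
qed

end



lemma psi_quot_deriv:
  assumes deriv: "\<And>x. x > 0 \<Longrightarrow> (\<psi> has_real_derivative \<psi>' x) (at x)"
    and ga: "ga > 0" and gb: "gb > 0"
    and da: "(A has_real_derivative A') (at s0)" and db: "(B has_real_derivative B') (at s0)"
    and a0: "A s0 = ga" and b0: "B s0 = gb"
  shows "((\<lambda>s. \<psi> (A s / B s)) has_real_derivative \<psi>' (ga / gb) * ((A' * gb - ga * B') / (gb * gb))) (at s0)"
proof -
  have q: "((\<lambda>s. A s / B s) has_real_derivative (A' * B s0 - A s0 * B') / (B s0 * B s0)) (at s0)"
    by (rule DERIV_divide[OF da db]) (use gb b0 in simp)
  have p: "(\<psi> has_real_derivative \<psi>' (A s0 / B s0)) (at (A s0 / B s0))"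
    by (rule deriv) (use ga gb a0 b0 in simp)
  from DERIV_chain2[OF p q] show ?thesis by (simp add: a0 b0)
qed

lemma lap_psi_deriv:
  assumes deriv: "\<And>x. x > 0 \<Longrightarrow> (\<psi> has_real_derivative \<psi>' x) (at x)"
    and pos: "\<And>w. g s0 w > 0"
    and dg: "\<And>w. ((\<lambda>s. g s w) has_real_derivative g' w) (at s0)"
  shows "((\<lambda>s. lap_psi E \<psi> (g s) v) has_real_derivative
     graph_lap E (\<lambda>w. \<psi>' (g s0 w / g s0 v) * ((g' w * g s0 v - g s0 w * g' v) / (g s0 v * g s0 v))) v) (at s0)"
  unfolding lap_psi_def graph_lap_def
  by (intro DERIV_sum DERIV_diff psi_quot_deriv[OF deriv] pos dg refl)

lemma lap_psi_deriv_omega: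
  assumes deriv: "\<And>x. x > 0 \<Longrightarrow> (\<psi> has_real_derivative \<psi>' x) (at x)"
    and pos: "\<And>w. g s0 w > 0"
    and dg: "\<And>w. ((\<lambda>s. g s w) has_real_derivative c * graph_lap E (g s0) w) (at s0)"
  shows "((\<lambda>s. lap_psi E \<psi> (g s) v) has_real_derivative c * omega_psi E \<psi>' (g s0) v) (at s0)"
proof -
  have e: "(\<lambda>w. \<psi>' (g s0 w / g s0 v) * ((c * graph_lap E (g s0) w * g s0 v - g s0 w * (c * graph_lap E (g s0) v)) / (g s0 v * g s0 v)))
     = (\<lambda>w. c * (\<psi>' (g s0 w / g s0 v) * (g s0 w / g s0 v) * (graph_lap E (g s0) w / g s0 w - graph_lap E (g s0) v / g s0 v)))"
  proof (rule ext)
    fix w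
    have "g s0 w \<noteq> 0" "g s0 v \<noteq> 0" using pos[of w] pos[of v] by auto
    then show "\<psi>' (g s0 w / g s0 v) * ((c * graph_lap E (g s0) w * g s0 v - g s0 w * (c * graph_lap E (g s0) v)) / (g s0 v * g s0 v))
     = c * (\<psi>' (g s0 w / g s0 v) * (g s0 w / g s0 v) * (graph_lap E (g s0) w / g s0 w - graph_lap E (g s0) v / g s0 v))"
      by (simp add: field_simps)
  qed
  have gl: "graph_lap E (\<lambda>w. c * h w) v = c * graph_lap E h v" for h
    by (simp add: lap_opm opm_cmult)
  have "((\<lambda>s. lap_psi E \<psi> (g s) v) has_real_derivative
     graph_lap E (\<lambda>w. \<psi>' (g s0 w / g s0 v) * ((c * graph_lap E (g s0) w * g s0 v - g s0 w * (c * graph_lap E (g s0) v)) / (g s0 v * g s0 v))) v) (at s0)"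
    by (rule lap_psi_deriv[OF deriv pos dg])
  then show ?thesis unfolding e gl omega_psi_def .
qed

lemma riccati:
  fixes F F' :: "real \<Rightarrow> real"
  assumes c: "c > 0" and t: "t \<ge> 0"
    and dF: "\<And>s. 0 \<le> s \<Longrightarrow> s \<le> t \<Longrightarrow> (F has_real_derivative F' s) (at s)"
    and ric: "\<And>s. 0 \<le> s \<Longrightarrow> s \<le> t \<Longrightarrow> F' s \<le> - c * (F s)^2"
  shows "F 0 - F t \<ge> c * t * F 0 * F t \<and> F t \<le> F 0"
proof -
  have dec: "F b \<le> F a" if "0 \<le> a" "a \<le> b" "b \<le> t" for a b
  proof (rule deriv_nonpos_imp_antimono[of a b F F'])
    fix x assume "x \<in> {a..b}"
    then have x: "0 \<le> x" "x \<le> t" using that by auto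
    show "(F has_real_derivative F' x) (at x)" by (rule dF[OF x])
    have "- c * (F x)^2 \<le> 0" using c by (simp add: mult_nonneg_nonneg)
    then show "F' x \<le> 0" using ric[OF x] by linarith
  qed (use that in auto)
  have nz_case: "F 0 - F t \<ge> c * t * F 0 * F t" if nz: "\<And>s. 0 \<le> s \<Longrightarrow> s \<le> t \<Longrightarrow> F s \<noteq> 0"
  proof -
    define R where "R s = 1 / F s - c * s" for s
    have "R 0 \<le> R t"
    proof (rule DERIV_nonneg_imp_nondecreasing[OF t])
      fix x assume x: "0 \<le> x" "x \<le> t"
      have "(R has_real_derivative (0 * F x - 1 * F' x) / (F x * F x) - c * 1) (at x)"
        unfolding R_def[abs_def]
        by (intro DERIV_diff DERIV_divide DERIV_const dF x DERIV_cmult DERIV_ident nz)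
      moreover have "(0 * F x - 1 * F' x) / (F x * F x) - c * 1 \<ge> 0"
      proof -
        have pos: "F x * F x > 0" using nz[OF x] by (simp add: zero_less_mult_iff) (use nz[OF x] in linarith)
        have "- F' x \<ge> c * (F x * F x)" using ric[OF x] by (simp add: power2_eq_square)
        then have "- F' x / (F x * F x) \<ge> c" using pos by (simp add: field_simps)
        then show ?thesis by simp
      qed
      ultimately show "\<exists>y. (R has_real_derivative y) (at x) \<and> 0 \<le> y" by blast
    qed
    then have "1 / F 0 \<le> 1 / F t - c * t" unfolding R_def by simp
    moreover have "F 0 * F t > 0"
    proof -
      have "F t \<le> F 0" using dec[of 0 t] t by simp
      moreover have "F 0 \<noteq> 0" "F t \<noteq> 0" using nz t by auto
      moreover have "F 0 > 0 \<or> F 0 < 0" using \<open>F 0 \<noteq> 0\<close> by linarith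
      moreover have "F 0 < 0 \<Longrightarrow> F t < 0" using calculation(1) by linarith
      moreover have "F 0 > 0 \<Longrightarrow> F t > 0"
      proof (rule ccontr)
        assume a: "F 0 > 0" "\<not> F t > 0"
        then have "F t < 0" using \<open>F t \<noteq> 0\<close> by linarith
        have "\<forall>x. 0 \<le> x \<and> x \<le> t \<longrightarrow> isCont F x"
          using dF DERIV_isCont by blast
        then obtain x where "0 \<le> x" "x \<le> t" "F x = 0"
          using IVT2[of F t 0 0] a \<open>F t < 0\<close> t by auto
        then show False using nz by auto
      qed
      ultimately show ?thesis by (auto simp: zero_less_mult_iff)
    qed
    ultimately have h: "(c * t + 1 / F 0) * (F 0 * F t) \<le> (1 / F t) * (F 0 * F t)"
      by (intro mult_right_mono) auto
    have "F 0 \<noteq> 0" "F t \<noteq> 0" using nz t by auto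
    then have "(c * t + 1 / F 0) * (F 0 * F t) = c * t * F 0 * F t + F t"
      "(1 / F t) * (F 0 * F t) = F 0" by (simp_all add: field_simps)
    with h show ?thesis by simp
  qed
  have "F t \<le> F 0" using dec[of 0 t] t by simp
  moreover have "F 0 - F t \<ge> c * t * F 0 * F t"
  proof (cases "F 0 \<ge> 0 \<and> F t \<le> 0")
    case True
    then have "c * t * F 0 * F t \<le> 0"
      using c t by (simp add: mult_nonneg_nonpos mult_nonneg_nonneg)
    moreover have "F 0 - F t \<ge> 0" using True by simp
    ultimately show ?thesis by linarith
  next
    case False
    then have "F 0 < 0 \<or> F t > 0" by auto
    then show ?thesis
    proof
      assume a: "F 0 < 0"
      show ?thesis by (rule nz_case) (use dec[of 0] a in force)
    next
      assume a: "F t > 0"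
      show ?thesis by (rule nz_case) (use dec[of _ t] a t in force)
    qed
  qed
  ultimately show ?thesis by simp
qed



lemma heat_add: "heat_sg E s (\<lambda>w. a w + b w) v = heat_sg E s a v + heat_sg E s b v"
  by (simp add: heat_repr[of E s "\<lambda>w. a w + b w"] heat_repr[of E s a] heat_repr[of E s b] sum.distrib distrib_right)

lemma heat_cmult: "heat_sg E s (\<lambda>w. c * a w) v = c * heat_sg E s a v"
  by (simp add: heat_repr[of E s "\<lambda>w. c * a w"] heat_repr[of E s a] sum_distrib_left mult.assoc)

lemma heat_deriv_fun:
  "((\<lambda>s. heat_sg E (t - s) f w) has_real_derivative -1 * graph_lap E (heat_sg E (t - s0) f) w) (at s0)"
proof -
  have "((\<lambda>s. heat_sg E (t - s) f w) has_real_derivative heat_sg E (t - s0) (graph_lap E f) w * (0 - 1)) (at s0)"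
    by (rule DERIV_chain2[OF heat_deriv DERIV_diff[OF DERIV_const DERIV_ident]])
  then show ?thesis by (simp add: heat_commute)
qed

lemma heat_deriv_fun0:
  "((\<lambda>s. heat_sg E s f w) has_real_derivative 1 * graph_lap E (heat_sg E s0 f) w) (at s0)"
  using heat_deriv[of E f w s0] by (simp add: heat_commute)

locale mt =
  fixes E :: "'a::finite \<Rightarrow> 'a \<Rightarrow> bool"
    and \<psi> \<psi>' :: "real \<Rightarrow> real" and d :: real
  assumes sym: "\<And>v w. E v w \<Longrightarrow> E w v"
    and deriv: "\<And>x. x > 0 \<Longrightarrow> (\<psi> has_real_derivative \<psi>' x) (at x)"
    and d_pos: "d > 0"
begin

lemma dir12:
  assumes CD: "CD_psi E \<psi> \<psi>' d" and f: "\<And>w. f w > 0" and t: "t \<ge> 0"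
  shows "heat_sg E t f v * lap_psi E \<psi> (heat_sg E t f) v
             \<ge> heat_sg E t (\<lambda>w. f w * lap_psi E \<psi> f w) v
                 * (1 + 2 * t / d * lap_psi E \<psi> (heat_sg E t f) v)
     \<and> heat_sg E t (\<lambda>w. f w * lap_psi E \<psi> f w) v \<le> heat_sg E t f v * lap_psi E \<psi> (heat_sg E t f) v"
proof -
  define g where "g s = heat_sg E (t - s) f" for s
  define H where "H s w = g s w * lap_psi E \<psi> (g s) w" for s w
  define F where "F s = heat_sg E s (H s) v" for s
  define P where "P = heat_sg E t f v"
  have Ppos: "P > 0" unfolding P_def by (rule heat_pos[OF sym t f])
  define c where "c = 2 / (d * P)"
  have cpos: "c > 0" unfolding c_def using Ppos d_pos by simp
  have gpos: "g s w > 0" if "s \<le> t" for s w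
  proof -
    have "0 \<le> t - s" using that by simp
    from heat_pos[OF sym this f] show ?thesis unfolding g_def .
  qed
  have dg: "((\<lambda>s. g s w) has_real_derivative -1 * graph_lap E (g s0) w) (at s0)" for s0 w
    unfolding g_def by (rule heat_deriv_fun)
  have J: "heat_sg E s (g s) v = P" for s
  proof -
    have "\<forall>x. ((\<lambda>s. heat_sg E s (g s) v) has_real_derivative 0) (at x)"
    proof
      fix x
      have "((\<lambda>s. heat_sg E s (g s) v) has_real_derivative
          heat_sg E x (graph_lap E (g x)) v + heat_sg E x (\<lambda>w. -1 * graph_lap E (g x) w) v) (at x)"
        by (rule heat_family_deriv) (rule dg)
      then show "((\<lambda>s. heat_sg E s (g s) v) has_real_derivative 0) (at x)"
        by (simp only: heat_cmult) simp
    qed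
    from DERIV_isconst_all[OF this] have "heat_sg E s (g s) v = heat_sg E t (g t) v" .
    then show ?thesis by (simp add: g_def heat_zero P_def)
  qed
  have "F 0 - F t \<ge> c * t * F 0 * F t \<and> F t \<le> F 0"
  proof (rule riccati[OF cpos t])
    fix s0 assume s0: "0 \<le> s0" "s0 \<le> t"
    define \<Lambda> where "\<Lambda> w = lap_psi E \<psi> (g s0) w" for w
    define \<Omega> where "\<Omega> w = omega_psi E \<psi>' (g s0) w" for w
    define H' where "H' w = (-1 * graph_lap E (g s0) w) * \<Lambda> w + (-1 * \<Omega> w) * g s0 w" for w
    have gp: "\<And>w. g s0 w > 0" using gpos s0 by auto
    have dH: "((\<lambda>s. H s w) has_real_derivative H' w) (at s0)" for w
      unfolding H_def H'_def \<Lambda>_def \<Omega>_def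
      by (rule DERIV_mult[OF dg lap_psi_deriv_omega[OF deriv gp dg]])
    show "(F has_real_derivative (heat_sg E s0 (graph_lap E (H s0)) v + heat_sg E s0 H' v)) (at s0)"
      unfolding F_def[abs_def] by (rule heat_family_deriv[OF dH])
    have eq: "graph_lap E (H s0) w + H' w = -2 * (g s0 w * gamma2_psi E \<psi> \<psi>' (g s0) w)" for w
    proof -
      have "g s0 w \<noteq> 0" using gp[of w] by simp
      then show ?thesis
        unfolding gamma2_psi_def H'_def \<Lambda>_def \<Omega>_def H_def
        by (simp add: field_simps)
    qed
    have cd: "gamma2_psi E \<psi> \<psi>' (g s0) w \<ge> (\<Lambda> w)^2 / d" for w
      using CD gp unfolding CD_psi_def \<Lambda>_def by blast
    have "heat_sg E s0 (graph_lap E (H s0)) v + heat_sg E s0 H' v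
        = heat_sg E s0 (\<lambda>w. graph_lap E (H s0) w + H' w) v"
      by (rule heat_add[symmetric])
    also have "\<dots> \<le> heat_sg E s0 (\<lambda>w. -(2/d) * (g s0 w * (\<Lambda> w)^2)) v"
    proof (rule heat_mono[OF sym s0(1)])
      fix w
      have "g s0 w * ((\<Lambda> w)^2 / d) \<le> g s0 w * gamma2_psi E \<psi> \<psi>' (g s0) w"
        using cd[of w] gp[of w] by (intro mult_left_mono) auto
      then show "graph_lap E (H s0) w + H' w \<le> -(2/d) * (g s0 w * (\<Lambda> w)^2)"
        unfolding eq by (simp add: field_simps)
    qed
    also have "\<dots> = -(2/d) * heat_sg E s0 (\<lambda>w. g s0 w * (\<Lambda> w)^2) v"
      by (rule heat_cmult)
    also have "\<dots> \<le> - c * (F s0)^2"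
    proof -
      have cs: "(F s0)^2 \<le> heat_sg E s0 (\<lambda>w. g s0 w * (\<Lambda> w)^2) v * P"
      proof -
        have "(heat_sg E s0 (\<lambda>w. g s0 w * \<Lambda> w) v)^2 \<le> heat_sg E s0 (\<lambda>w. g s0 w * (\<Lambda> w)^2) v * heat_sg E s0 (g s0) v"
          by (rule heat_CS[where E=E, OF sym s0(1) gp])
        then show ?thesis using J[of s0]
        unfolding F_def H_def \<Lambda>_def by simp
      qed
      then have "(F s0)^2 / P \<le> heat_sg E s0 (\<lambda>w. g s0 w * (\<Lambda> w)^2) v"
        using Ppos by (simp add: field_simps)
      then have "(2/d) * ((F s0)^2 / P) \<le> (2/d) * heat_sg E s0 (\<lambda>w. g s0 w * (\<Lambda> w)^2) v"
        using d_pos by (intro mult_left_mono) auto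
      then show ?thesis unfolding c_def by (simp add: field_simps)
    qed
    finally show "heat_sg E s0 (graph_lap E (H s0)) v + heat_sg E s0 H' v \<le> - c * (F s0)^2" .
  qed
  moreover have F0: "F 0 = P * lap_psi E \<psi> (heat_sg E t f) v"
    unfolding F_def H_def g_def P_def by (simp add: heat_zero)
  moreover have Ft: "F t = heat_sg E t (\<lambda>w. f w * lap_psi E \<psi> f w) v"
    unfolding F_def H_def g_def by (simp add: heat_zero)
  ultimately have r: "F 0 - F t \<ge> c * t * F 0 * F t" "F t \<le> F 0" by auto
  have "c * t * F 0 * F t = F t * (2 * t / d * lap_psi E \<psi> (heat_sg E t f) v)"
    unfolding c_def F0 using Ppos by (simp add: field_simps)
  with r show ?thesis unfolding F0 Ft P_def by (simp add: algebra_simps)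
qed

end



context mt begin

lemma dir21:
  assumes H: "\<forall>f. (\<forall>v. f v > 0) \<longrightarrow> (\<forall>t\<ge>0. \<forall>v.
             heat_sg E t f v * lap_psi E \<psi> (heat_sg E t f) v
             \<ge> heat_sg E t (\<lambda>w. f w * lap_psi E \<psi> f w) v
                 * (1 + 2 * t / d * lap_psi E \<psi> (heat_sg E t f) v))"
  shows "CD_psi E \<psi> \<psi>' d"
  unfolding CD_psi_def
proof (intro allI impI)
  fix f :: "'a \<Rightarrow> real" and v
  assume fpos: "\<forall>v. f v > 0"
  define \<Lambda> where "\<Lambda> t = lap_psi E \<psi> (heat_sg E t f) v" for t
  define P where "P t = heat_sg E t f v" for t
  define Q where "Q t = heat_sg E t (\<lambda>w. f w * lap_psi E \<psi> f w) v" for t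
  define G where "G t = P t * \<Lambda> t - Q t * (1 + 2 * t / d * \<Lambda> t)" for t
  have Gnn: "G t \<ge> 0" if "t \<ge> 0" for t
    using H fpos that unfolding G_def P_def Q_def \<Lambda>_def by auto
  have G0: "G 0 = 0"
    unfolding G_def P_def Q_def \<Lambda>_def by (simp add: heat_zero)
  define \<Omega> where "\<Omega> = omega_psi E \<psi>' f v"
  have dP: "(P has_real_derivative graph_lap E f v) (at 0)"
    using heat_deriv[of E f v 0] unfolding P_def[abs_def] by (simp add: heat_zero)
  have dQ: "(Q has_real_derivative graph_lap E (\<lambda>w. f w * lap_psi E \<psi> f w) v) (at 0)"
    using heat_deriv[of E "\<lambda>w. f w * lap_psi E \<psi> f w" v 0] unfolding Q_def[abs_def] by (simp add: heat_zero)
  have dL: "(\<Lambda> has_real_derivative 1 * \<Omega>) (at 0)"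
  proof -
    have gp: "\<And>w. heat_sg E 0 f w > 0" using fpos by (simp add: heat_zero)
    have "((\<lambda>s. lap_psi E \<psi> (heat_sg E s f) v) has_real_derivative 1 * omega_psi E \<psi>' (heat_sg E 0 f) v) (at 0)"
      by (rule lap_psi_deriv_omega[OF deriv gp heat_deriv_fun0])
    then show ?thesis unfolding \<Lambda>_def[abs_def] \<Omega>_def by (simp add: heat_zero)
  qed
  have dR: "((\<lambda>t. 1 + 2 * t / d * \<Lambda> t) has_real_derivative 2 / d * \<Lambda> 0) (at 0)"
  proof -
    have a: "((\<lambda>t. 2 * t / d) has_real_derivative 2 * 1 / d) (at 0)"
      by (intro DERIV_cdivide DERIV_cmult DERIV_ident)
    have "((\<lambda>t. 1 + 2 * t / d * \<Lambda> t) has_real_derivative 0 + (2 * 1 / d * \<Lambda> 0 + 1 * \<Omega> * (2 * 0 / d))) (at 0)"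
      by (rule DERIV_add[OF DERIV_const DERIV_mult[OF a dL]])
    then show ?thesis by simp
  qed
  define D where "D = (graph_lap E f v * \<Lambda> 0 + 1 * \<Omega> * P 0) - (graph_lap E (\<lambda>w. f w * lap_psi E \<psi> f w) v * (1 + 2 * 0 / d * \<Lambda> 0) + 2 / d * \<Lambda> 0 * Q 0)"
  have dG: "(G has_real_derivative D) (at 0)"
    unfolding G_def[abs_def] D_def by (rule DERIV_diff[OF DERIV_mult[OF dP dL] DERIV_mult[OF dQ dR]])
  have Dnn: "D \<ge> 0"
  proof (rule ccontr)
    assume "\<not> D \<ge> 0"
    then have "D < 0" by simp
    from DERIV_neg_dec_right[OF dG this] obtain e where e: "e > 0" "\<forall>h>0. h < e \<longrightarrow> G 0 > G (0 + h)" by blast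
    then have "G 0 > G (e/2)" by auto
    moreover have "G (e/2) \<ge> 0" using Gnn e by simp
    ultimately show False using G0 by simp
  qed
  have fv: "f v > 0" using fpos by simp
  have "D = f v * (2 * gamma2_psi E \<psi> \<psi>' f v - 2 / d * (lap_psi E \<psi> f v)^2)"
    unfolding D_def gamma2_psi_def \<Omega>_def \<Lambda>_def P_def Q_def using fv
    by (simp add: heat_zero field_simps power2_eq_square)
  with Dnn fv have "2 * gamma2_psi E \<psi> \<psi>' f v - 2 / d * (lap_psi E \<psi> f v)^2 \<ge> 0"
    by (simp add: zero_le_mult_iff)
  then show "gamma2_psi E \<psi> \<psi>' f v \<ge> (lap_psi E \<psi> f v)^2 / d" by simp
qed

end

theorem mainTheorem8:
  fixes E :: "'a::finite \<Rightarrow> 'a \<Rightarrow> bool"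
    and \<psi> \<psi>' :: "real \<Rightarrow> real" and d :: real
  assumes sym: "\<And>v w. E v w \<Longrightarrow> E w v"
    and irrefl: "\<And>v. \<not> E v v"
    and deriv: "\<And>x. x > 0 \<Longrightarrow> (\<psi> has_real_derivative \<psi>' x) (at x)"
    and cont: "continuous_on {0<..} \<psi>'"
    and d_pos: "d > 0"
  shows "(CD_psi E \<psi> \<psi>' d \<longleftrightarrow>
          (\<forall>f. (\<forall>v. f v > 0) \<longrightarrow> (\<forall>t\<ge>0. \<forall>v.
             heat_sg E t f v * lap_psi E \<psi> (heat_sg E t f) v
             \<ge> heat_sg E t (\<lambda>w. f w * lap_psi E \<psi> f w) v
                 * (1 + 2 * t / d * lap_psi E \<psi> (heat_sg E t f) v))))
       \<and> (CD_psi E \<psi> \<psi>' d \<longrightarrow>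
          (\<forall>f. (\<forall>v. f v > 0) \<longrightarrow> (\<forall>t>0. \<forall>v.
             - lap_psi E \<psi> (heat_sg E t f) v \<le> d / (2 * t))))"
proof -
  interpret mt E \<psi> \<psi>' d
    by unfold_locales (use sym deriv d_pos in auto)
  have A: "CD_psi E \<psi> \<psi>' d \<longleftrightarrow>
          (\<forall>f. (\<forall>v. f v > 0) \<longrightarrow> (\<forall>t\<ge>0. \<forall>v.
             heat_sg E t f v * lap_psi E \<psi> (heat_sg E t f) v
             \<ge> heat_sg E t (\<lambda>w. f w * lap_psi E \<psi> f w) v
                 * (1 + 2 * t / d * lap_psi E \<psi> (heat_sg E t f) v)))"
  proof
    assume CD: "CD_psi E \<psi> \<psi>' d"
    show "\<forall>f. (\<forall>v. f v > 0) \<longrightarrow> (\<forall>t\<ge>0. \<forall>v.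
             heat_sg E t f v * lap_psi E \<psi> (heat_sg E t f) v
             \<ge> heat_sg E t (\<lambda>w. f w * lap_psi E \<psi> f w) v
                 * (1 + 2 * t / d * lap_psi E \<psi> (heat_sg E t f) v))"
      using dir12[OF CD] by blast
  next
    assume "\<forall>f. (\<forall>v. f v > 0) \<longrightarrow> (\<forall>t\<ge>0. \<forall>v.
             heat_sg E t f v * lap_psi E \<psi> (heat_sg E t f) v
             \<ge> heat_sg E t (\<lambda>w. f w * lap_psi E \<psi> f w) v
                 * (1 + 2 * t / d * lap_psi E \<psi> (heat_sg E t f) v))"
    then show "CD_psi E \<psi> \<psi>' d" by (rule dir21)
  qed
  have B: "- lap_psi E \<psi> (heat_sg E t f) v \<le> d / (2 * t)"
    if CD: "CD_psi E \<psi> \<psi>' d" and f: "\<forall>v. f v > 0" and t: "t > 0" for f t v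
  proof -
    define L where "L = lap_psi E \<psi> (heat_sg E t f) v"
    define P where "P = heat_sg E t f v"
    define Q where "Q = heat_sg E t (\<lambda>w. f w * lap_psi E \<psi> f w) v"
    have Ppos: "P > 0" unfolding P_def using f t by (intro heat_pos[OF sym]) auto
    have r: "P * L \<ge> Q * (1 + 2 * t / d * L)" "Q \<le> P * L"
      using dir12[OF CD, of f t v] f t unfolding L_def P_def Q_def by auto
    show ?thesis
    proof (cases "L \<ge> 0")
      case True
      then show ?thesis using d_pos t unfolding L_def by (smt (verit) divide_pos_pos)
    next
      case False
      then have PL: "P * L < 0" using Ppos by (simp add: mult_pos_neg)
      then have Qn: "Q < 0" using r(2) by linarith
      have "1 + 2 * t / d * L \<ge> 0"
      proof (rule ccontr)
        assume "\<not> ?thesis"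
        then have "Q * (1 + 2 * t / d * L) > 0" using Qn by (simp add: mult_neg_neg)
        then show False using r(1) PL by linarith
      qed
      then have "- L * (2 * t / d) \<le> 1" by (simp add: algebra_simps)
      then show ?thesis unfolding L_def[symmetric] using t d_pos by (simp add: field_simps)
    qed
  qed
  show ?thesis using A B by blast
qed

end
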